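(* Let $M$ be such that $\sqrt M$ is an even integer, and consider $M$-QAM with transmitted constellation points $x+\mathrm jy$, $x,y\in\{\pm1,\pm3,\dots,\pm(\sqrt M-1)\}$, normalized by $k_1=\sqrt{3/(2(M-1))}$, each sent with equal probability. Fix $K\ge1$, nonzero channel coefficients $\tilde h_1,\dots,\tilde h_K$, $\sigma_1^2,\sigma_2^2>0$, and $\vec\rho\in[0,1]^K\setminus\{\vec0,\vec1\}$; let $\Theta_1=\sum_k\rho_k|\tilde h_k|^2$, $\Theta_2=\sum_k(1-\rho_k)^2|\tilde h_k|^4$. When the symbol $(x_i,y_i)$ is sent, the receiver observes $\tilde Y_1=\breve x_i+\mathrm j\breve y_i+\tilde Z$ and $Y_2=\breve z_i+N$, where $\breve x_i=k_1\sqrt{\Theta_1P}x_i$, $\breve y_i=k_1\sqrt{\Theta_1P}y_i$, $\breve z_i=k_1^2\sqrt{\Theta_2}P(x_i^2+y_i^2)$, $\tilde Z\sim\mathcal{CN}(0,\sigma_1^2)$ and $N\sim\mathcal N(0,\sigma_2^2)$ independent, and maximum-likelihood detection is used. Let $\breve x_1=k_1\sqrt{\Theta_1P}$ (the value for in-phase coordinate $1$). Then in the high-SNR regime ($P\to\infty$) the symbol error rate satisfies $$P_e\approx\frac{4}{\sqrt M}\,Q\Big(\frac{\sqrt2\,\breve x_1}{\sigma_1}\Big).$$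
   Context: $Q(x)=\frac12\mathrm{erfc}(x/\sqrt2)$; $\sigma_1$ is the positive square root of $\sigma_1^2$; $\vec0=(0,\dots,0)$, $\vec1=(1,\dots,1)$; $\mathcal{CN}(0,\sigma^2)$ has variance $\sigma^2/2$ per real dimension. $P_e=\frac1M\sum_i\Pr(\text{error}\mid i\text{ sent})$. The relation $\approx$ denotes the high-SNR asymptotic approximation as $P\to\infty$ (asymptotic equivalence). *)

theory Defs
  imports "HOL-Probability.Probability" "HOL-Library.Landau_Symbols"
begin

definition erfc :: "real \<Rightarrow> real" where
  "erfc x = 2 / sqrt pi * (LINT t:{x..}|lborel. exp (- (t ^ 2)))"

definition Q_func :: "real \<Rightarrow> real" where
  "Q_func x = erfc (x / sqrt 2) / 2"

text \<open>PAM amplitudes {+-1, +-3, ..., +-(m-1)} for m = sqrt M, and the QAM symbol set.\<close>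
definition qam_amps :: "nat \<Rightarrow> int set" where
  "qam_amps m = {a. odd a \<and> \<bar>a\<bar> \<le> int m - 1}"

definition qam_symbols :: "nat \<Rightarrow> (int \<times> int) set" where
  "qam_symbols m = qam_amps m \<times> qam_amps m"

definition qam_k1 :: "nat \<Rightarrow> real" where
  "qam_k1 M = sqrt (3 / (2 * (real M - 1)))"

text \<open>Noiseless received point (Re Y1, Im Y1, Y2) = (x_breve, y_breve, z_breve) for symbol s.\<close>
definition rx_mean :: "nat \<Rightarrow> real \<Rightarrow> real \<Rightarrow> real \<Rightarrow> int \<times> int \<Rightarrow> real \<times> real \<times> real" where
  "rx_mean M \<Theta>1 \<Theta>2 P s =
     (qam_k1 M * sqrt (\<Theta>1 * P) * of_int (fst s),
      qam_k1 M * sqrt (\<Theta>1 * P) * of_int (snd s),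
      (qam_k1 M)\<^sup>2 * sqrt \<Theta>2 * P * ((of_int (fst s))\<^sup>2 + (of_int (snd s))\<^sup>2))"

text \<open>Likelihood of observation r given mean mu: CN(0,s1sq) noise = two independent real
  N(0,s1sq/2) components, plus independent real N(0,s2sq) noise on Y2.
  normal_density takes the standard deviation.\<close>
definition rx_lik :: "real \<Rightarrow> real \<Rightarrow> real \<times> real \<times> real \<Rightarrow> real \<times> real \<times> real \<Rightarrow> real" where
  "rx_lik s1sq s2sq \<mu> r =
     normal_density (fst \<mu>) (sqrt (s1sq / 2)) (fst r) *
     normal_density (fst (snd \<mu>)) (sqrt (s1sq / 2)) (fst (snd r)) *
     normal_density (snd (snd \<mu>)) (sqrt s2sq) (snd (snd r))"

definition ml_error_region ::
  "nat \<Rightarrow> nat \<Rightarrow> real \<Rightarrow> real \<Rightarrow> real \<Rightarrow> real \<Rightarrow> real \<Rightarrow> int \<times> int \<Rightarrow> (real \<times> real \<times> real) set" where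
  "ml_error_region M m \<Theta>1 \<Theta>2 s1sq s2sq P s =
     {r. \<exists>t \<in> qam_symbols m. t \<noteq> s \<and>
          rx_lik s1sq s2sq (rx_mean M \<Theta>1 \<Theta>2 P t) r \<ge> rx_lik s1sq s2sq (rx_mean M \<Theta>1 \<Theta>2 P s) r}"

definition ml_cond_error ::
  "nat \<Rightarrow> nat \<Rightarrow> real \<Rightarrow> real \<Rightarrow> real \<Rightarrow> real \<Rightarrow> real \<Rightarrow> int \<times> int \<Rightarrow> real" where
  "ml_cond_error M m \<Theta>1 \<Theta>2 s1sq s2sq P s =
     (LINT r|lborel. indicator (ml_error_region M m \<Theta>1 \<Theta>2 s1sq s2sq P s) r *
                     rx_lik s1sq s2sq (rx_mean M \<Theta>1 \<Theta>2 P s) r)"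

definition qam_Pe :: "nat \<Rightarrow> nat \<Rightarrow> real \<Rightarrow> real \<Rightarrow> real \<Rightarrow> real \<Rightarrow> real \<Rightarrow> real" where
  "qam_Pe M m \<Theta>1 \<Theta>2 s1sq s2sq P =
     (1 / real M) * (\<Sum>s\<in>qam_symbols m. ml_cond_error M m \<Theta>1 \<Theta>2 s1sq s2sq P s)"

end

theory Submission
  imports Defs "HOL-Real_Asymp.Real_Asymp"
begin

lemma prod2:
  fixes g h :: "real \<Rightarrow> ennreal"
  assumes [measurable]: "g \<in> borel_measurable borel" "h \<in> borel_measurable borel"
  shows "(\<integral>\<^sup>+ r. g (fst r) * h (snd r) \<partial>(lborel::(real\<times>real) measure)) =
     integral\<^sup>N lborel g * integral\<^sup>N lborel h"
proof -
  have "(\<integral>\<^sup>+ r. g (fst r) * h (snd r) \<partial>(lborel::(real\<times>real) measure)) =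
        (\<integral>\<^sup>+ r. g (fst r) * h (snd r) \<partial>(lborel \<Otimes>\<^sub>M lborel))"
    by (simp add: lborel_prod)
  also have "\<dots> = (\<integral>\<^sup>+ x. \<integral>\<^sup>+ y. g x * h y \<partial>lborel \<partial>lborel)"
    by (subst lborel.nn_integral_fst[symmetric]) auto
  also have "\<dots> = (\<integral>\<^sup>+ x. g x * integral\<^sup>N lborel h \<partial>lborel)"
    by (simp add: nn_integral_cmult)
  also have "\<dots> = integral\<^sup>N lborel g * integral\<^sup>N lborel h"
    by (simp add: nn_integral_multc)
  finally show ?thesis .
qed

lemma prod3:
  fixes f g h :: "real \<Rightarrow> ennreal"
  assumes [measurable]: "f \<in> borel_measurable borel" "g \<in> borel_measurable borel" "h \<in> borel_measurable borel"
  shows "(\<integral>\<^sup>+ r. f (fst r) * g (fst (snd r)) * h (snd (snd r)) \<partial>(lborel::(real\<times>real\<times>real) measure)) =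
     integral\<^sup>N lborel f * integral\<^sup>N lborel g * integral\<^sup>N lborel h"
proof -
  have m2: "(\<lambda>x::real\<times>real. g (fst x) * h (snd x)) \<in> borel_measurable (lborel \<Otimes>\<^sub>M lborel)" by measurable
  hence m2' [measurable]: "(\<lambda>x::real\<times>real. g (fst x) * h (snd x)) \<in> borel_measurable lborel" by (simp add: lborel_prod)
  have m: "(\<lambda>r::real\<times>real\<times>real. f (fst r) * (g (fst (snd r)) * h (snd (snd r)))) \<in> borel_measurable (lborel \<Otimes>\<^sub>M lborel)"
    by measurable
  have "(\<integral>\<^sup>+ r. f (fst r) * g (fst (snd r)) * h (snd (snd r)) \<partial>(lborel::(real\<times>real\<times>real) measure)) =
        (\<integral>\<^sup>+ r. f (fst r) * (g (fst (snd r)) * h (snd (snd r))) \<partial>(lborel \<Otimes>\<^sub>M lborel))"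
    by (simp add: lborel_prod mult.assoc)
  also have "\<dots> = (\<integral>\<^sup>+ x. \<integral>\<^sup>+ y. f x * (g (fst y) * h (snd y)) \<partial>lborel \<partial>lborel)"
    by (subst lborel.nn_integral_fst[symmetric]) (auto simp: m)
  also have "\<dots> = (\<integral>\<^sup>+ x. f x * (integral\<^sup>N lborel g * integral\<^sup>N lborel h) \<partial>lborel)"
    by (simp add: nn_integral_cmult[OF m2'] prod2)
  also have "\<dots> = integral\<^sup>N lborel f * integral\<^sup>N lborel g * integral\<^sup>N lborel h"
    by (simp add: nn_integral_multc mult.assoc)
  finally show ?thesis .
qed

lemma nd_nn: "\<sigma> > 0 \<Longrightarrow> (\<integral>\<^sup>+x. ennreal (normal_density \<mu> \<sigma> x) \<partial>lborel) = 1"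
  by (subst nn_integral_eq_integral) (auto intro: integrable_normal_density)

lemma mgf_pt:
  assumes "\<sigma> > 0"
  shows "exp (c * (x - \<mu>)) * normal_density \<mu> \<sigma> x = exp (c\<^sup>2 * \<sigma>\<^sup>2 / 2) * normal_density (\<mu> + c * \<sigma>\<^sup>2) \<sigma> x"
proof -
  have "c * (x - \<mu>) + (-(x - \<mu>)\<^sup>2/ (2 * \<sigma>\<^sup>2)) = c\<^sup>2 * \<sigma>\<^sup>2 / 2 + (-(x - (\<mu> + c * \<sigma>\<^sup>2))\<^sup>2/ (2 * \<sigma>\<^sup>2))"
    using assms by (simp add: field_simps power2_eq_square)
  then have "exp (c * (x - \<mu>)) * exp (-(x - \<mu>)\<^sup>2/ (2 * \<sigma>\<^sup>2)) = exp (c\<^sup>2 * \<sigma>\<^sup>2 / 2) * exp (-(x - (\<mu> + c * \<sigma>\<^sup>2))\<^sup>2/ (2 * \<sigma>\<^sup>2))"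
    by (metis exp_add)
  then show ?thesis unfolding normal_density_def by (metis (no_types, lifting) mult.left_commute)
qed

lemma mgf_nn:
  assumes "\<sigma> > 0"
  shows "(\<integral>\<^sup>+x. ennreal (exp (c * (x - \<mu>)) * normal_density \<mu> \<sigma> x) \<partial>lborel) = ennreal (exp (c\<^sup>2 * \<sigma>\<^sup>2 / 2))"
proof -
  have "(\<integral>\<^sup>+x. ennreal (exp (c * (x - \<mu>)) * normal_density \<mu> \<sigma> x) \<partial>lborel)
     = (\<integral>\<^sup>+x. ennreal (exp (c\<^sup>2 * \<sigma>\<^sup>2 / 2)) * ennreal (normal_density (\<mu> + c * \<sigma>\<^sup>2) \<sigma> x) \<partial>lborel)"
    by (simp add: mgf_pt[OF assms] ennreal_mult)
  also have "\<dots> = ennreal (exp (c\<^sup>2 * \<sigma>\<^sup>2 / 2))"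
    using assms by (simp add: nn_integral_cmult nd_nn)
  finally show ?thesis .
qed

lemma nd_half: "normal_density 0 (1 / sqrt 2) t = exp (- t\<^sup>2) / sqrt pi"
  by (simp add: normal_density_def power_divide real_sqrt_mult)

lemma Q_nn: "ennreal (Q_func x) = (\<integral>\<^sup>+t. indicator {x / sqrt 2..} t * ennreal (normal_density 0 (1 / sqrt 2) t) \<partial>lborel)"
proof -
  have int: "integrable lborel (\<lambda>t. indicator {x / sqrt 2..} t * normal_density 0 (1 / sqrt 2) t)"
    using integrable_real_mult_indicator[of "{x / sqrt 2..}" lborel "normal_density 0 (1 / sqrt 2)"]
    by (simp add: integrable_normal_density mult.commute)
  have "Q_func x = (LINT t|lborel. indicator {x / sqrt 2..} t * normal_density 0 (1 / sqrt 2) t)"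
  proof -
    have "(LINT t|lborel. indicator {x / sqrt 2..} t * normal_density 0 (1 / sqrt 2) t)
       = (LINT t|lborel. (indicator {x / sqrt 2..} t * exp (- t\<^sup>2)) / sqrt pi)"
      unfolding nd_half by (simp add: times_divide_eq_right)
    also have "\<dots> = (LINT t|lborel. indicator {x / sqrt 2..} t * exp (- t\<^sup>2)) / sqrt pi"
      by (rule integral_divide_zero)
    finally show ?thesis
      unfolding Q_func_def erfc_def set_lebesgue_integral_def by simp
  qed
  also have "ennreal \<dots> = (\<integral>\<^sup>+t. ennreal (indicator {x / sqrt 2..} t * normal_density 0 (1 / sqrt 2) t) \<partial>lborel)"
    by (rule nn_integral_eq_integral[symmetric, OF int]) auto
  also have "\<dots> = (\<integral>\<^sup>+t. indicator {x / sqrt 2..} t * ennreal (normal_density 0 (1 / sqrt 2) t) \<partial>lborel)"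
    by (intro nn_integral_cong) (auto simp: indicator_def)
  finally show ?thesis .
qed

lemma main1d:
  assumes "\<mu> \<noteq> 0" "\<sigma> > 0"
  shows "(\<integral>\<^sup>+x. indicator {x. \<mu> * x \<le> 0} x * ennreal (normal_density \<mu> \<sigma> x) \<partial>lborel) = ennreal (Q_func (\<bar>\<mu>\<bar> / \<sigma>))"
proof -
  define c where "c = - sgn \<mu> * \<sigma> * sqrt 2"
  have c0: "c \<noteq> 0" using assms by (simp add: c_def sgn_if)
  have ac: "\<bar>c\<bar> = \<sigma> * sqrt 2" using assms by (simp add: c_def abs_mult)
  have pt: "ennreal \<bar>c\<bar> * (indicator {x. \<mu> * x \<le> 0} (\<mu> + c * t) * ennreal (normal_density \<mu> \<sigma> (\<mu> + c * t)))
      = indicator {\<bar>\<mu>\<bar> / \<sigma> / sqrt 2..} t * ennreal (normal_density 0 (1 / sqrt 2) t)" for t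
  proof -
    have sm: "sgn \<mu> * \<mu> = \<bar>\<mu>\<bar>" by (simp add: abs_sgn mult.commute)
    have "\<mu> * (\<mu> + c * t) = \<bar>\<mu>\<bar> * (\<bar>\<mu>\<bar> - \<sigma> * sqrt 2 * t)"
      unfolding c_def using sm by (simp add: algebra_simps power2_eq_square abs_mult_self_eq)
    then have h1: "(\<mu> * (\<mu> + c * t) \<le> 0) = (\<bar>\<mu>\<bar> - \<sigma> * sqrt 2 * t \<le> 0)"
      using assms by (simp add: mult_le_0_iff)
    have h2: "(\<bar>\<mu>\<bar> - \<sigma> * sqrt 2 * t \<le> 0) = (\<bar>\<mu>\<bar> / \<sigma> / sqrt 2 \<le> t)"
      using assms by (simp add: field_simps)
    have iff: "(\<mu> + c * t \<in> {x. \<mu> * x \<le> 0}) = (t \<in> {\<bar>\<mu>\<bar> / \<sigma> / sqrt 2..})"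
      using h1 h2 by simp
    have "\<bar>c\<bar> * normal_density \<mu> \<sigma> (\<mu> + c * t) = normal_density 0 (1 / sqrt 2) t"
    proof -
      have c2: "c\<^sup>2 = 2 * \<sigma>\<^sup>2" unfolding c_def using assms
        by (simp add: power_mult_distrib sgn_if)
      have "(c * t)\<^sup>2 / (2 * \<sigma>\<^sup>2) = t\<^sup>2" using assms by (simp add: power_mult_distrib c2)
      moreover have "\<sigma> * sqrt 2 / sqrt (2 * pi * \<sigma>\<^sup>2) = 1 / sqrt pi"
        using assms by (simp add: real_sqrt_mult field_simps)
      ultimately have "\<sigma> * sqrt 2 / sqrt (2 * pi * \<sigma>\<^sup>2) * exp (-(c * t)\<^sup>2 / (2 * \<sigma>\<^sup>2)) = exp (- t\<^sup>2) / sqrt pi"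
        by (simp only: minus_divide_left) simp
      moreover have "\<bar>c\<bar> * normal_density \<mu> \<sigma> (\<mu> + c * t) = \<sigma> * sqrt 2 / sqrt (2 * pi * \<sigma>\<^sup>2) * exp (-(c * t)\<^sup>2 / (2 * \<sigma>\<^sup>2))"
        unfolding ac normal_density_def by simp
      ultimately show ?thesis by (simp add: nd_half)
    qed
    then show ?thesis using iff
      by (auto simp: indicator_def ennreal_mult[symmetric])
  qed
  have "(\<integral>\<^sup>+x. indicator {x. \<mu> * x \<le> 0} x * ennreal (normal_density \<mu> \<sigma> x) \<partial>lborel)
     = \<bar>c\<bar> * (\<integral>\<^sup>+t. indicator {x. \<mu> * x \<le> 0} (\<mu> + c * t) * ennreal (normal_density \<mu> \<sigma> (\<mu> + c * t)) \<partial>lborel)"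
    by (rule nn_integral_real_affine[OF _ c0]) measurable
  also have "\<dots> = (\<integral>\<^sup>+t. ennreal \<bar>c\<bar> * (indicator {x. \<mu> * x \<le> 0} (\<mu> + c * t) * ennreal (normal_density \<mu> \<sigma> (\<mu> + c * t))) \<partial>lborel)"
    by (rule nn_integral_cmult[symmetric]) measurable
  also have "\<dots> = (\<integral>\<^sup>+t. indicator {\<bar>\<mu>\<bar> / \<sigma> / sqrt 2..} t * ennreal (normal_density 0 (1 / sqrt 2) t) \<partial>lborel)"
    by (simp add: pt)
  also have "\<dots> = ennreal (Q_func (\<bar>\<mu>\<bar> / \<sigma>))" by (simp add: Q_nn)
  finally show ?thesis .
qed

lemma Q_nonneg: "Q_func x \<ge> 0"
  unfolding Q_func_def erfc_def set_lebesgue_integral_def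
  by (auto intro!: integral_nonneg_AE mult_nonneg_nonneg simp: indicator_def)

lemma Q_lower:
  assumes "x \<ge> 0"
  shows "exp (- (x / sqrt 2 + 1)\<^sup>2) / sqrt pi \<le> Q_func x"
proof -
  define y where "y = x / sqrt 2"
  have y0: "y \<ge> 0" using assms by (simp add: y_def)
  define e where "e = exp (- (y + 1)\<^sup>2) / sqrt pi"
  have "ennreal e = (\<integral>\<^sup>+t. ennreal e * indicator {y..y+1} t \<partial>lborel)"
    by (simp add: nn_integral_cmult_indicator)
  also have "\<dots> \<le> (\<integral>\<^sup>+t. indicator {y..} t * ennreal (normal_density 0 (1 / sqrt 2) t) \<partial>lborel)"
  proof (rule nn_integral_mono)
    fix t :: real
    show "ennreal e * indicator {y..y+1} t \<le> indicator {y..} t * ennreal (normal_density 0 (1 / sqrt 2) t)"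
    proof (cases "t \<in> {y..y+1}")
      case True
      then have "t\<^sup>2 \<le> (y+1)\<^sup>2" using y0 by (intro power_mono) auto
      then have "e \<le> normal_density 0 (1 / sqrt 2) t"
        unfolding e_def nd_half by (intro divide_right_mono) auto
      then show ?thesis using True by (auto simp: indicator_def)
    qed (auto simp: indicator_def)
  qed
  also have "\<dots> = ennreal (Q_func x)" by (simp add: Q_nn y_def)
  finally have le: "ennreal e \<le> ennreal (Q_func x)" .
  have "e > 0" by (simp add: e_def)
  then have "Q_func x > 0" using le
    by (metis ennreal_eq_0_iff ennreal_le_iff2 ennreal_less_zero_iff leD not_less)
  then show ?thesis using le by (simp add: e_def y_def)
qed

lemma lik_meas[measurable]: "(\<lambda>r. rx_lik s1 s2 \<mu> r) \<in> borel_measurable borel"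
  unfolding rx_lik_def borel_prod[symmetric] by measurable

lemma lik_meas'[measurable]: "(\<lambda>r. rx_lik s1 s2 \<mu> r) \<in> borel_measurable lborel"
  using lik_meas by (simp add: measurable_lborel1)

definition qf :: "real \<Rightarrow> real \<Rightarrow> real \<times> real \<times> real \<Rightarrow> real \<times> real \<times> real \<Rightarrow> real" where
  "qf s1 s2 \<mu> r = (fst r - fst \<mu>)\<^sup>2 / s1 + (fst (snd r) - fst (snd \<mu>))\<^sup>2 / s1 + (snd (snd r) - snd (snd \<mu>))\<^sup>2 / (2 * s2)"

definition Kd :: "real \<Rightarrow> real \<Rightarrow> real \<times> real \<times> real \<Rightarrow> real \<times> real \<times> real \<Rightarrow> real" where
  "Kd a b \<mu> \<nu> = ((fst \<nu> - fst \<mu>)\<^sup>2 + (fst (snd \<nu>) - fst (snd \<mu>))\<^sup>2) / a + (snd (snd \<nu>) - snd (snd \<mu>))\<^sup>2 / (2 * b)"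

context
  fixes s1 s2 :: real
  assumes s1: "s1 > 0" and s2: "s2 > 0"
begin

lemma lik_prod3: "ennreal (rx_lik s1 s2 \<mu> r) = ennreal (normal_density (fst \<mu>) (sqrt (s1/2)) (fst r)) *
    ennreal (normal_density (fst (snd \<mu>)) (sqrt (s1/2)) (fst (snd r))) * ennreal (normal_density (snd (snd \<mu>)) (sqrt s2) (snd (snd r)))"
  by (simp add: rx_lik_def ennreal_mult)

lemma lik_total: "(\<integral>\<^sup>+r. ennreal (rx_lik s1 s2 \<mu> r) \<partial>lborel) = 1"
  unfolding lik_prod3 using s1 s2 by (subst prod3) (auto simp: nd_nn)

lemma lik_prob: "prob_space (density lborel (\<lambda>r. ennreal (rx_lik s1 s2 \<mu> r)))"
  by (rule prob_spaceI) (simp add: emeasure_density lik_total)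

lemma cond_eq:
  assumes [measurable]: "A \<in> sets borel"
  shows "(LINT r|lborel. indicator A r * rx_lik s1 s2 \<mu> r) = measure (density lborel (\<lambda>r. ennreal (rx_lik s1 s2 \<mu> r))) A"
proof -
  have "(LINT r|lborel. indicator A r * rx_lik s1 s2 \<mu> r) = enn2real (\<integral>\<^sup>+r. ennreal (indicator A r * rx_lik s1 s2 \<mu> r) \<partial>lborel)"
    apply (rule integral_eq_nn_integral)
    subgoal by measurable
    subgoal by (simp add: rx_lik_def)
    done
  also have "(\<integral>\<^sup>+r. ennreal (indicator A r * rx_lik s1 s2 \<mu> r) \<partial>lborel) = (\<integral>\<^sup>+r. ennreal (rx_lik s1 s2 \<mu> r) * indicator A r \<partial>lborel)"
    by (intro nn_integral_cong) (auto simp: indicator_def)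
  also have "\<dots> = emeasure (density lborel (\<lambda>r. ennreal (rx_lik s1 s2 \<mu> r))) A"
    by (subst emeasure_density) auto
  finally show ?thesis by (simp add: measure_def)
qed

lemma lik_exp: "rx_lik s1 s2 \<mu> r = 1 / (sqrt (pi * s1) * sqrt (pi * s1) * sqrt (2 * pi * s2)) * exp (- qf s1 s2 \<mu> r)"
proof -
  have a: "(sqrt (s1/2))\<^sup>2 = s1/2" "(sqrt s2)\<^sup>2 = s2" using s1 s2 by auto
  show ?thesis unfolding rx_lik_def normal_density_def a qf_def
    by (simp add: exp_add[symmetric] exp_diff field_simps)
qed

lemma lik_le_iff: "rx_lik s1 s2 \<mu> r \<le> rx_lik s1 s2 \<nu> r \<longleftrightarrow> qf s1 s2 \<nu> r \<le> qf s1 s2 \<mu> r"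
proof -
  have c: "1 / (sqrt (pi * s1) * sqrt (pi * s1) * sqrt (2 * pi * s2)) > 0" using s1 s2 by simp
  show ?thesis unfolding lik_exp mult_le_cancel_left_pos[OF c] by simp
qed

lemma emeasure_le_measure:
  assumes "emeasure N A \<le> ennreal x" "x \<ge> 0"
  shows "measure N A \<le> x"
  using assms unfolding measure_def
  by (metis enn2real_ennreal enn2real_mono ennreal_less_top)

lemma chernoff:
  assumes T: "T \<ge> 0" and S: "S = w1\<^sup>2 * (s1/2) + w2\<^sup>2 * (s1/2) + w3\<^sup>2 * s2" "S > 0"
  shows "measure (density lborel (\<lambda>r. ennreal (rx_lik s1 s2 \<mu> r)))
     {r. T \<le> w1 * (fst r - fst \<mu>) + w2 * (fst (snd r) - fst (snd \<mu>)) + w3 * (snd (snd r) - snd (snd \<mu>))}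
     \<le> exp (- T\<^sup>2 / (2 * S))"
proof -
  define A where "A = {r. T \<le> w1 * (fst r - fst \<mu>) + w2 * (fst (snd r) - fst (snd \<mu>)) + w3 * (snd (snd r) - snd (snd \<mu>))}"
  have "{r \<in> space (borel \<Otimes>\<^sub>M borel \<Otimes>\<^sub>M borel). T \<le> w1 * (fst r - fst \<mu>) + w2 * (fst (snd r) - fst (snd \<mu>)) + w3 * (snd (snd r) - snd (snd \<mu>))} \<in> sets (borel \<Otimes>\<^sub>M borel \<Otimes>\<^sub>M borel)"
    by measurable
  then have [measurable]: "A \<in> sets borel" unfolding A_def borel_prod by simp
  define l where "l = T / S"
  have l0: "l \<ge> 0" using T S by (simp add: l_def)
  define f1 where "f1 x = exp (l * w1 * (x - fst \<mu>)) * normal_density (fst \<mu>) (sqrt (s1/2)) x" for x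
  define f2 where "f2 x = exp (l * w2 * (x - fst (snd \<mu>))) * normal_density (fst (snd \<mu>)) (sqrt (s1/2)) x" for x
  define f3 where "f3 x = exp (l * w3 * (x - snd (snd \<mu>))) * normal_density (snd (snd \<mu>)) (sqrt s2) x" for x
  have [measurable]: "f1 \<in> borel_measurable borel" "f2 \<in> borel_measurable borel" "f3 \<in> borel_measurable borel"
    unfolding f1_def[abs_def] f2_def[abs_def] f3_def[abs_def] by measurable
  have pt: "ennreal (rx_lik s1 s2 \<mu> r) * indicator A r \<le> ennreal (exp (- l * T)) * (ennreal (f1 (fst r)) * ennreal (f2 (fst (snd r))) * ennreal (f3 (snd (snd r))))" for r
  proof (cases "r \<in> A")
    case True
    define L where "L = w1 * (fst r - fst \<mu>) + w2 * (fst (snd r) - fst (snd \<mu>)) + w3 * (snd (snd r) - snd (snd \<mu>))"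
    have "T \<le> L" using True by (simp add: A_def L_def)
    then have "1 \<le> exp (l * (L - T))" using l0 by simp
    moreover have "rx_lik s1 s2 \<mu> r \<ge> 0" by (simp add: rx_lik_def)
    ultimately have "rx_lik s1 s2 \<mu> r \<le> exp (l * (L - T)) * rx_lik s1 s2 \<mu> r"
      using mult_right_mono by fastforce
    also have "exp (l * (L - T)) = exp (- l * T) * (exp (l * w1 * (fst r - fst \<mu>)) * exp (l * w2 * (fst (snd r) - fst (snd \<mu>))) * exp (l * w3 * (snd (snd r) - snd (snd \<mu>))))"
      by (simp add: L_def exp_add[symmetric] algebra_simps)
    finally have "rx_lik s1 s2 \<mu> r \<le> exp (- l * T) * (f1 (fst r) * f2 (fst (snd r)) * f3 (snd (snd r)))"
      by (simp add: f1_def f2_def f3_def rx_lik_def mult_ac)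
    then show ?thesis using True
      by (simp add: ennreal_mult[symmetric] f1_def f2_def f3_def ennreal_leI)
  qed simp
  have "emeasure (density lborel (\<lambda>r. ennreal (rx_lik s1 s2 \<mu> r))) A = (\<integral>\<^sup>+r. ennreal (rx_lik s1 s2 \<mu> r) * indicator A r \<partial>lborel)"
    by (subst emeasure_density) auto
  also have "\<dots> \<le> (\<integral>\<^sup>+r. ennreal (exp (- l * T)) * (ennreal (f1 (fst r)) * ennreal (f2 (fst (snd r))) * ennreal (f3 (snd (snd r)))) \<partial>lborel)"
    by (intro nn_integral_mono pt)
  also have "\<dots> = ennreal (exp (- l * T)) * ((\<integral>\<^sup>+x. ennreal (f1 x) \<partial>lborel) * (\<integral>\<^sup>+x. ennreal (f2 x) \<partial>lborel) * (\<integral>\<^sup>+x. ennreal (f3 x) \<partial>lborel))"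
  proof -
    have "(\<lambda>r. ennreal (f1 (fst r)) * ennreal (f2 (fst (snd r))) * ennreal (f3 (snd (snd r)))) \<in> borel_measurable (borel \<Otimes>\<^sub>M borel \<Otimes>\<^sub>M borel)"
      by measurable
    then have m: "(\<lambda>r. ennreal (f1 (fst r)) * ennreal (f2 (fst (snd r))) * ennreal (f3 (snd (snd r)))) \<in> borel_measurable lborel"
      by (simp add: borel_prod measurable_lborel1)
    show ?thesis
      by (subst nn_integral_cmult[OF m]) (simp add: prod3[of "\<lambda>x. ennreal (f1 x)" "\<lambda>x. ennreal (f2 x)" "\<lambda>x. ennreal (f3 x)"])
  qed
  also have "\<dots> = ennreal (exp (- l * T)) * (ennreal (exp ((l * w1)\<^sup>2 * (sqrt (s1/2))\<^sup>2 / 2)) * ennreal (exp ((l * w2)\<^sup>2 * (sqrt (s1/2))\<^sup>2 / 2)) * ennreal (exp ((l * w3)\<^sup>2 * (sqrt s2)\<^sup>2 / 2)))"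
    unfolding f1_def f2_def f3_def using s1 s2 by (simp add: mgf_nn)
  also have "\<dots> = ennreal (exp (- l * T + l\<^sup>2 * S / 2))"
    using s1 s2 by (simp add: ennreal_mult[symmetric] exp_add[symmetric] S power_mult_distrib algebra_simps add_divide_distrib)
  also have "- l * T + l\<^sup>2 * S / 2 = - T\<^sup>2 / (2 * S)"
    using S(2) by (simp add: l_def power2_eq_square field_simps)
  finally show ?thesis unfolding A_def by (intro emeasure_le_measure) auto
qed

lemma lik_set_meas[measurable]: "{r. rx_lik s1 s2 \<mu> r \<le> rx_lik s1 s2 \<nu> r} \<in> sets borel"
proof -
  have "{r \<in> space borel. rx_lik s1 s2 \<mu> r \<le> rx_lik s1 s2 \<nu> r} \<in> sets borel" by measurable
  then show ?thesis by simp
qed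

lemma lin_set_meas: "{r::real\<times>real\<times>real. (T::real) \<le> w1 * (fst r - fst \<mu>) + w2 * (fst (snd r) - fst (snd \<mu>)) + w3 * (snd (snd r) - snd (snd \<mu>))} \<in> sets borel"
proof -
  have "{r \<in> space (borel \<Otimes>\<^sub>M borel \<Otimes>\<^sub>M borel). T \<le> w1 * (fst r - fst \<mu>) + w2 * (fst (snd r) - fst (snd \<mu>)) + w3 * (snd (snd r) - snd (snd \<mu>))} \<in> sets (borel \<Otimes>\<^sub>M borel \<Otimes>\<^sub>M borel)"
    by measurable
  then show ?thesis unfolding borel_prod by simp
qed

lemma pairwise:
  "measure (density lborel (\<lambda>r. ennreal (rx_lik s1 s2 \<mu> r))) {r. rx_lik s1 s2 \<mu> r \<le> rx_lik s1 s2 \<nu> r} \<le> exp (- Kd s1 s2 \<mu> \<nu> / 4)"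
proof -
  let ?D = "density lborel (\<lambda>r. ennreal (rx_lik s1 s2 \<mu> r))"
  interpret P: prob_space ?D by (rule lik_prob)
  define K where "K = Kd s1 s2 \<mu> \<nu>"
  have K0: "K \<ge> 0" unfolding K_def Kd_def using s1 s2 by simp
  show ?thesis
  proof (cases "K = 0")
    case True
    have "P.prob {r. rx_lik s1 s2 \<mu> r \<le> rx_lik s1 s2 \<nu> r} \<le> 1" by (rule P.prob_le_1)
    then show ?thesis using True unfolding K_def[symmetric] by simp
  next
    case False
    then have Kp: "K > 0" using K0 by simp
    define d1 where "d1 = fst \<nu> - fst \<mu>"
    define d2 where "d2 = fst (snd \<nu>) - fst (snd \<mu>)"
    define d3 where "d3 = snd (snd \<nu>) - snd (snd \<mu>)"
    have Kdef: "K = (d1\<^sup>2 + d2\<^sup>2) / s1 + d3\<^sup>2 / (2 * s2)" unfolding K_def Kd_def d1_def d2_def d3_def by (rule refl)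
    have sub: "{r. rx_lik s1 s2 \<mu> r \<le> rx_lik s1 s2 \<nu> r} \<subseteq>
      {r. K \<le> (2 * d1 / s1) * (fst r - fst \<mu>) + (2 * d2 / s1) * (fst (snd r) - fst (snd \<mu>)) + (d3 / s2) * (snd (snd r) - snd (snd \<mu>))}"
    proof safe
      fix r assume "rx_lik s1 s2 \<mu> r \<le> rx_lik s1 s2 \<nu> r"
      then have "qf s1 s2 \<nu> r \<le> qf s1 s2 \<mu> r" by (simp add: lik_le_iff)
      moreover have "qf s1 s2 \<nu> r - qf s1 s2 \<mu> r = K - ((2 * d1 / s1) * (fst r - fst \<mu>) + (2 * d2 / s1) * (fst (snd r) - fst (snd \<mu>)) + (d3 / s2) * (snd (snd r) - snd (snd \<mu>)))"
      proof -
        define n1 where "n1 = fst r - fst \<mu>"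
        define n2 where "n2 = fst (snd r) - fst (snd \<mu>)"
        define n3 where "n3 = snd (snd r) - snd (snd \<mu>)"
        have q1: "qf s1 s2 \<nu> r = (n1 - d1)\<^sup>2 / s1 + (n2 - d2)\<^sup>2 / s1 + (n3 - d3)\<^sup>2 / (2 * s2)"
          unfolding qf_def n1_def n2_def n3_def d1_def d2_def d3_def by (simp add: algebra_simps)
        have q2: "qf s1 s2 \<mu> r = n1\<^sup>2 / s1 + n2\<^sup>2 / s1 + n3\<^sup>2 / (2 * s2)"
          unfolding qf_def n1_def n2_def n3_def by simp
        have "(n1 - d1)\<^sup>2 / s1 + (n2 - d2)\<^sup>2 / s1 + (n3 - d3)\<^sup>2 / (2 * s2) - (n1\<^sup>2 / s1 + n2\<^sup>2 / s1 + n3\<^sup>2 / (2 * s2))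
          = (d1\<^sup>2 + d2\<^sup>2) / s1 + d3\<^sup>2 / (2 * s2) - ((2 * d1 / s1) * n1 + (2 * d2 / s1) * n2 + (d3 / s2) * n3)"
        proof -
          have a1: "(n1 - d1)\<^sup>2 / s1 - n1\<^sup>2 / s1 = d1\<^sup>2 / s1 - (2 * d1 / s1) * n1"
            using s1 by (simp add: power2_eq_square field_simps)
          have a2: "(n2 - d2)\<^sup>2 / s1 - n2\<^sup>2 / s1 = d2\<^sup>2 / s1 - (2 * d2 / s1) * n2"
            using s1 by (simp add: power2_eq_square field_simps)
          have a3: "(n3 - d3)\<^sup>2 / (2 * s2) - n3\<^sup>2 / (2 * s2) = d3\<^sup>2 / (2 * s2) - (d3 / s2) * n3"
            using s2 by (simp add: power2_eq_square field_simps)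
          have a4: "(d1\<^sup>2 + d2\<^sup>2) / s1 = d1\<^sup>2 / s1 + d2\<^sup>2 / s1" by (rule add_divide_distrib)
          show ?thesis using a1 a2 a3 a4 by linarith
        qed
        then show ?thesis unfolding q1 q2 Kdef n1_def n2_def n3_def .
      qed
      ultimately show "K \<le> (2 * d1 / s1) * (fst r - fst \<mu>) + (2 * d2 / s1) * (fst (snd r) - fst (snd \<mu>)) + (d3 / s2) * (snd (snd r) - snd (snd \<mu>))"
        by linarith
    qed
    have S: "(2 * d1 / s1)\<^sup>2 * (s1/2) + (2 * d2 / s1)\<^sup>2 * (s1/2) + (d3 / s2)\<^sup>2 * s2 = 2 * K"
    proof -
      have a1: "(2 * d1 / s1)\<^sup>2 * (s1/2) = 2 * (d1\<^sup>2 / s1)" using s1 by (simp add: power2_eq_square field_simps)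
      have a2: "(2 * d2 / s1)\<^sup>2 * (s1/2) = 2 * (d2\<^sup>2 / s1)" using s1 by (simp add: power2_eq_square field_simps)
      have a3: "(d3 / s2)\<^sup>2 * s2 = 2 * (d3\<^sup>2 / (2 * s2))" using s2 by (simp add: power2_eq_square field_simps)
      have a4: "(d1\<^sup>2 + d2\<^sup>2) / s1 = d1\<^sup>2 / s1 + d2\<^sup>2 / s1" by (rule add_divide_distrib)
      show ?thesis unfolding Kdef a1 a2 a3 a4 by (simp add: distrib_left)
    qed
    have "P.prob {r. rx_lik s1 s2 \<mu> r \<le> rx_lik s1 s2 \<nu> r} \<le>
      P.prob {r. K \<le> (2 * d1 / s1) * (fst r - fst \<mu>) + (2 * d2 / s1) * (fst (snd r) - fst (snd \<mu>)) + (d3 / s2) * (snd (snd r) - snd (snd \<mu>))}"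
      by (rule P.finite_measure_mono[OF sub]) (simp only: sets_density sets_lborel lin_set_meas)
    also have "\<dots> \<le> exp (- K\<^sup>2 / (2 * (2 * K)))"
      using chernoff[OF K0 S[symmetric]] Kp by simp
    also have "- K\<^sup>2 / (2 * (2 * K)) = - K / 4" using Kp by (simp add: power2_eq_square)
    finally show ?thesis by (simp add: K_def)
  qed
qed


lemma neighbor_x:
  assumes "fst \<mu> \<noteq> 0" "\<nu> = (- fst \<mu>, snd \<mu>)"
  shows "measure (density lborel (\<lambda>r. ennreal (rx_lik s1 s2 \<mu> r))) {r. rx_lik s1 s2 \<mu> r \<le> rx_lik s1 s2 \<nu> r}
     = Q_func (\<bar>fst \<mu>\<bar> / sqrt (s1/2))"
proof -
  have set: "{r. rx_lik s1 s2 \<mu> r \<le> rx_lik s1 s2 \<nu> r} = {r. fst \<mu> * fst r \<le> 0}"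
  proof -
    have "qf s1 s2 \<nu> r \<le> qf s1 s2 \<mu> r \<longleftrightarrow> fst \<mu> * fst r \<le> 0" for r
    proof -
      have "qf s1 s2 \<nu> r - qf s1 s2 \<mu> r = ((fst r + fst \<mu>)\<^sup>2 - (fst r - fst \<mu>)\<^sup>2) / s1"
        unfolding qf_def assms(2) by (simp add: diff_divide_distrib)
      also have "\<dots> = 4 * (fst \<mu> * fst r) / s1" by (simp add: power2_eq_square algebra_simps)
      finally have "qf s1 s2 \<nu> r - qf s1 s2 \<mu> r = 4 * (fst \<mu> * fst r) / s1" .
      moreover have "4 * (fst \<mu> * fst r) / s1 \<le> 0 \<longleftrightarrow> fst \<mu> * fst r \<le> 0" using s1 by (simp add: divide_le_0_iff)
      ultimately show ?thesis by linarith
    qed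
    then show ?thesis by (auto simp: lik_le_iff)
  qed
  have [measurable]: "{x::real. fst \<mu> * x \<le> 0} \<in> sets borel" by measurable
  have "emeasure (density lborel (\<lambda>r. ennreal (rx_lik s1 s2 \<mu> r))) {r. fst \<mu> * fst r \<le> 0}
     = (\<integral>\<^sup>+r. ennreal (rx_lik s1 s2 \<mu> r) * indicator {r. fst \<mu> * fst r \<le> 0} r \<partial>lborel)"
  proof (subst emeasure_density)
    have "{r::real\<times>real\<times>real. r \<in> space (borel \<Otimes>\<^sub>M borel \<Otimes>\<^sub>M borel) \<and> fst \<mu> * fst r \<le> 0} \<in> sets (borel \<Otimes>\<^sub>M borel \<Otimes>\<^sub>M borel)"
      by measurable
    then show "{r::real\<times>real\<times>real. fst \<mu> * fst r \<le> 0} \<in> sets lborel" unfolding borel_prod by simp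
  qed auto
  also have "\<dots> = (\<integral>\<^sup>+r. (indicator {x. fst \<mu> * x \<le> 0} (fst r) * ennreal (normal_density (fst \<mu>) (sqrt (s1/2)) (fst r))) *
    ennreal (normal_density (fst (snd \<mu>)) (sqrt (s1/2)) (fst (snd r))) * ennreal (normal_density (snd (snd \<mu>)) (sqrt s2) (snd (snd r))) \<partial>lborel)"
    by (intro nn_integral_cong) (simp add: lik_prod3 indicator_def)
  also have "\<dots> = ennreal (Q_func (\<bar>fst \<mu>\<bar> / sqrt (s1/2)))"
    using s1 s2 assms(1) by (subst prod3) (auto simp: nd_nn main1d)
  finally show ?thesis unfolding set measure_def using Q_nonneg by simp
qed

lemma neighbor_y:
  assumes "fst (snd \<mu>) \<noteq> 0" "\<nu> = (fst \<mu>, - fst (snd \<mu>), snd (snd \<mu>))"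
  shows "measure (density lborel (\<lambda>r. ennreal (rx_lik s1 s2 \<mu> r))) {r. rx_lik s1 s2 \<mu> r \<le> rx_lik s1 s2 \<nu> r}
     = Q_func (\<bar>fst (snd \<mu>)\<bar> / sqrt (s1/2))"
proof -
  have set: "{r. rx_lik s1 s2 \<mu> r \<le> rx_lik s1 s2 \<nu> r} = {r. fst (snd \<mu>) * fst (snd r) \<le> 0}"
  proof -
    have "qf s1 s2 \<nu> r \<le> qf s1 s2 \<mu> r \<longleftrightarrow> fst (snd \<mu>) * fst (snd r) \<le> 0" for r
    proof -
      have "qf s1 s2 \<nu> r - qf s1 s2 \<mu> r = ((fst (snd r) + fst (snd \<mu>))\<^sup>2 - (fst (snd r) - fst (snd \<mu>))\<^sup>2) / s1"
        unfolding qf_def assms(2) by (simp add: diff_divide_distrib)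
      also have "\<dots> = 4 * (fst (snd \<mu>) * fst (snd r)) / s1" by (simp add: power2_eq_square algebra_simps)
      finally have "qf s1 s2 \<nu> r - qf s1 s2 \<mu> r = 4 * (fst (snd \<mu>) * fst (snd r)) / s1" .
      moreover have "4 * (fst (snd \<mu>) * fst (snd r)) / s1 \<le> 0 \<longleftrightarrow> fst (snd \<mu>) * fst (snd r) \<le> 0" using s1 by (simp add: divide_le_0_iff)
      ultimately show ?thesis by linarith
    qed
    then show ?thesis by (auto simp: lik_le_iff)
  qed
  have [measurable]: "{x::real. fst (snd \<mu>) * x \<le> 0} \<in> sets borel" by measurable
  have "emeasure (density lborel (\<lambda>r. ennreal (rx_lik s1 s2 \<mu> r))) {r. fst (snd \<mu>) * fst (snd r) \<le> 0}
     = (\<integral>\<^sup>+r. ennreal (rx_lik s1 s2 \<mu> r) * indicator {r. fst (snd \<mu>) * fst (snd r) \<le> 0} r \<partial>lborel)"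
  proof (subst emeasure_density)
    have "{r::real\<times>real\<times>real. r \<in> space (borel \<Otimes>\<^sub>M borel \<Otimes>\<^sub>M borel) \<and> fst (snd \<mu>) * fst (snd r) \<le> 0} \<in> sets (borel \<Otimes>\<^sub>M borel \<Otimes>\<^sub>M borel)"
      by measurable
    then show "{r::real\<times>real\<times>real. fst (snd \<mu>) * fst (snd r) \<le> 0} \<in> sets lborel" unfolding borel_prod by simp
  qed auto
  also have "\<dots> = (\<integral>\<^sup>+r. ennreal (normal_density (fst \<mu>) (sqrt (s1/2)) (fst r)) *
    (indicator {x. fst (snd \<mu>) * x \<le> 0} (fst (snd r)) * ennreal (normal_density (fst (snd \<mu>)) (sqrt (s1/2)) (fst (snd r)))) * ennreal (normal_density (snd (snd \<mu>)) (sqrt s2) (snd (snd r))) \<partial>lborel)"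
    by (intro nn_integral_cong) (simp add: lik_prod3 indicator_def)
  also have "\<dots> = ennreal (Q_func (\<bar>fst (snd \<mu>)\<bar> / sqrt (s1/2)))"
    using s1 s2 assms(1) by (subst prod3) (auto simp: nd_nn main1d)
  finally show ?thesis unfolding set measure_def using Q_nonneg by simp
qed

end


lemma odd_sq_ge: fixes a :: int assumes "odd a" "\<bar>a\<bar> \<noteq> 1" shows "a\<^sup>2 \<ge> 9"
proof -
  have "a \<noteq> 0" using assms by auto
  have "\<bar>a\<bar> \<ge> 3"
  proof (rule ccontr)
    assume "\<not> \<bar>a\<bar> \<ge> 3"
    then have "a \<in> {-2,-1,0,1,2}" by auto
    then show False using assms by auto
  qed
  then have "\<bar>a\<bar> * \<bar>a\<bar> \<ge> 3 * 3" by (intro mult_mono) auto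
  then show ?thesis by (simp add: power2_eq_square abs_mult[symmetric])
qed

lemma even_nz_sq: fixes d :: int assumes "even d" "d \<noteq> 0" shows "d\<^sup>2 \<ge> 4"
proof -
  have "\<bar>d\<bar> \<ge> 2"
  proof (rule ccontr)
    assume "\<not> \<bar>d\<bar> \<ge> 2"
    then have "d \<in> {-1,0,1}" by auto
    then show False using assms by auto
  qed
  then have "\<bar>d\<bar> * \<bar>d\<bar> \<ge> 2 * 2" by (intro mult_mono) auto
  then show ?thesis by (simp add: power2_eq_square abs_mult[symmetric])
qed

lemma energy_sep:
  fixes s1 s2 t1 t2 :: int
  assumes odd: "odd s1" "odd s2" "odd t1" "odd t2"
    and E: "s1\<^sup>2 + s2\<^sup>2 = t1\<^sup>2 + t2\<^sup>2"
    and ne: "(t1, t2) \<noteq> (s1, s2)"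
    and nx: "\<not> (t1 = - s1 \<and> t2 = s2 \<and> \<bar>s1\<bar> = 1)"
    and ny: "\<not> (t1 = s1 \<and> t2 = - s2 \<and> \<bar>s2\<bar> = 1)"
  shows "(t1 - s1)\<^sup>2 + (t2 - s2)\<^sup>2 \<ge> 8"
proof (cases "t1 = s1")
  case True
  then have "t2\<^sup>2 = s2\<^sup>2" using E by simp
  then have "t2 = s2 \<or> t2 = - s2" by (simp add: power2_eq_iff)
  then have t2: "t2 = - s2" using ne True by auto
  then have "\<bar>s2\<bar> \<noteq> 1" using ny True by auto
  then have "s2\<^sup>2 \<ge> 9" using odd_sq_ge odd by auto
  then show ?thesis using True t2 by (simp add: power2_eq_square algebra_simps)
next
  case False
  note F1 = False
  show ?thesis
  proof (cases "t2 = s2")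
    case True
    then have "t1\<^sup>2 = s1\<^sup>2" using E by simp
    then have "t1 = s1 \<or> t1 = - s1" by (simp add: power2_eq_iff)
    then have t1: "t1 = - s1" using F1 by auto
    then have "\<bar>s1\<bar> \<noteq> 1" using nx True by auto
    then have "s1\<^sup>2 \<ge> 9" using odd_sq_ge odd by auto
    then show ?thesis using True t1 by (simp add: power2_eq_square algebra_simps)
  next
    case False
    have "(t1 - s1)\<^sup>2 \<ge> 4" using F1 odd by (intro even_nz_sq) auto
    moreover have "(t2 - s2)\<^sup>2 \<ge> 4" using False odd by (intro even_nz_sq) auto
    ultimately show ?thesis by simp
  qed
qed

lemma amps_eq:
  assumes "even m" "m > 0"
  shows "qam_amps m = (\<lambda>k. 2 * k + 1 - int m) ` {0..<int m}"
proof safe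
  fix a assume "a \<in> qam_amps m"
  then have a: "odd a" "\<bar>a\<bar> \<le> int m - 1" by (auto simp: qam_amps_def)
  obtain j where j: "m = 2 * j" using assms by auto
  obtain i where i: "a = 2 * i + 1" using a(1) by (metis oddE)
  show "a \<in> (\<lambda>k. 2 * k + 1 - int m) ` {0..<int m}"
  proof
    show "a = 2 * (i + int j) + 1 - int m" using i j by simp
    show "i + int j \<in> {0..<int m}" using a(2) i j by auto
  qed
next
  fix k assume "k \<in> {0..<int m}"
  then show "2 * k + 1 - int m \<in> qam_amps m" using assms by (auto simp: qam_amps_def)
qed

lemma amps_card:
  assumes "even m" "m > 0"
  shows "card (qam_amps m) = m" "finite (qam_amps m)"
proof -
  have "inj_on (\<lambda>k. 2 * k + 1 - int m) {0..<int m}" by (auto simp: inj_on_def)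
  then show "card (qam_amps m) = m" unfolding amps_eq[OF assms] by (simp add: card_image)
  show "finite (qam_amps m)" unfolding amps_eq[OF assms] by simp
qed

lemma amps_one:
  assumes "even m" "m > 0"
  shows "{a \<in> qam_amps m. \<bar>a\<bar> = 1} = {-1, 1}"
proof -
  have "m \<ge> 2" using assms by presburger
  then show ?thesis by (auto simp: qam_amps_def)
qed

lemma cnt_sum:
  assumes "even m" "m > 0"
  shows "(\<Sum>s\<in>qam_symbols m. ((if \<bar>fst s\<bar> = 1 then 1 else 0) + (if \<bar>snd s\<bar> = 1 then 1 else 0) :: real)) = 4 * real m"
proof -
  let ?A = "qam_amps m"
  let ?g = "\<lambda>x::int. (if \<bar>x\<bar> = 1 then 1 else 0 :: real)"
  have fin: "finite ?A" using amps_card[OF assms] by simp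
  have g: "(\<Sum>x\<in>?A. ?g x) = 2"
  proof -
    have "(\<Sum>x\<in>?A. ?g x) = (\<Sum>x\<in>{x \<in> ?A. \<bar>x\<bar> = 1}. 1)"
      using sum.inter_filter[OF fin, of "\<lambda>_. 1::real" "\<lambda>x. \<bar>x\<bar> = 1"] by simp
    also have "\<dots> = 2" unfolding amps_one[OF assms] by simp
    finally show ?thesis .
  qed
  have "(\<Sum>s\<in>qam_symbols m. ?g (fst s) + ?g (snd s)) = (\<Sum>x\<in>?A. \<Sum>y\<in>?A. ?g x + ?g y)"
    unfolding qam_symbols_def by (simp add: sum.cartesian_product case_prod_beta)
  also have "\<dots> = (\<Sum>x\<in>?A. real m * ?g x + 2)"
    by (simp add: sum.distrib g amps_card[OF assms])
  also have "\<dots> = 4 * real m"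
    by (simp add: sum.distrib g amps_card[OF assms] sum_distrib_left[symmetric])
  finally show ?thesis .
qed


context
  fixes M m :: nat and \<Theta>1 \<Theta>2 s1 s2 P :: real
  assumes M: "M = m ^ 2" and ev: "even m" and m0: "m > 0" and T1: "\<Theta>1 > 0" and T2: "\<Theta>2 > 0"
    and s1: "s1 > 0" and s2: "s2 > 0" and P: "P > 0"
    and Pbig: "P \<ge> 16 * \<Theta>1 * s2 / ((qam_k1 M)\<^sup>2 * \<Theta>2 * s1)"
begin

lemma k_pos: "qam_k1 M > 0"
proof -
  have "m \<ge> 2" using ev m0 by presburger
  then have "M \<ge> 4" unfolding M by (metis power2_nat_le_eq_le power2_eq_square numeral_times_numeral semiring_norm(12) mult_2 numeral_Bit0 numeral_One)
  then show ?thesis unfolding qam_k1_def by simp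
qed

definition "aa = qam_k1 M * sqrt (\<Theta>1 * P)"
definition "xx = sqrt 2 * aa / sqrt s1"

lemma aa_pos: "aa > 0" unfolding aa_def using k_pos T1 P by simp

lemma mu_eq: "rx_mean M \<Theta>1 \<Theta>2 P s = (aa * of_int (fst s), aa * of_int (snd s),
   (qam_k1 M)\<^sup>2 * sqrt \<Theta>2 * P * ((of_int (fst s))\<^sup>2 + (of_int (snd s))\<^sup>2))"
  unfolding rx_mean_def aa_def by simp

lemma xx_eq: "aa / sqrt (s1 / 2) = xx"
  unfolding xx_def using s1 by (simp add: real_sqrt_divide field_simps)

lemma xx_sq: "xx\<^sup>2 = 2 * aa\<^sup>2 / s1"
  unfolding xx_def using s1 by (simp add: power_divide power_mult_distrib)

abbreviation "Dm s \<equiv> density lborel (\<lambda>r. ennreal (rx_lik s1 s2 (rx_mean M \<Theta>1 \<Theta>2 P s) r))"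
abbreviation "Bs s t \<equiv> {r. rx_lik s1 s2 (rx_mean M \<Theta>1 \<Theta>2 P s) r \<le> rx_lik s1 s2 (rx_mean M \<Theta>1 \<Theta>2 P t) r}"

lemma nb_x:
  assumes "\<bar>fst s\<bar> = 1"
  shows "measure (Dm s) (Bs s (- fst s, snd s)) = Q_func xx"
proof -
  have "measure (Dm s) (Bs s (- fst s, snd s)) = Q_func (\<bar>fst (rx_mean M \<Theta>1 \<Theta>2 P s)\<bar> / sqrt (s1/2))"
    using assms aa_pos by (intro neighbor_x[OF s1 s2]) (auto simp: mu_eq)
  also have "\<bar>fst (rx_mean M \<Theta>1 \<Theta>2 P s)\<bar> = aa"
    using assms aa_pos by (simp add: mu_eq abs_mult)
  finally show ?thesis by (simp add: xx_eq)
qed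

lemma nb_y:
  assumes "\<bar>snd s\<bar> = 1"
  shows "measure (Dm s) (Bs s (fst s, - snd s)) = Q_func xx"
proof -
  have "measure (Dm s) (Bs s (fst s, - snd s)) = Q_func (\<bar>fst (snd (rx_mean M \<Theta>1 \<Theta>2 P s))\<bar> / sqrt (s1/2))"
    using assms aa_pos by (intro neighbor_y[OF s1 s2]) (auto simp: mu_eq)
  also have "\<bar>fst (snd (rx_mean M \<Theta>1 \<Theta>2 P s))\<bar> = aa"
    using assms aa_pos by (simp add: mu_eq abs_mult)
  finally show ?thesis by (simp add: xx_eq)
qed

lemma big_ineq: "((qam_k1 M)\<^sup>2 * sqrt \<Theta>2 * P)\<^sup>2 / (2 * s2) \<ge> 4 * xx\<^sup>2"
proof -
  define k where "k = qam_k1 M"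
  have k: "k > 0" using k_pos by (simp add: k_def)
  have "16 * \<Theta>1 * s2 \<le> P * (k\<^sup>2 * \<Theta>2 * s1)"
    using Pbig k T2 s1 by (simp add: k_def pos_divide_le_eq)
  then have "0 \<le> k\<^sup>2 * \<Theta>2 * P * s1 - 16 * \<Theta>1 * s2" by (simp add: algebra_simps)
  then have h: "0 \<le> k\<^sup>2 * P / (2 * s1 * s2) * (k\<^sup>2 * \<Theta>2 * P * s1 - 16 * \<Theta>1 * s2)"
    using k P s1 s2 by simp
  have aa2: "aa\<^sup>2 = k\<^sup>2 * \<Theta>1 * P" unfolding aa_def k_def using T1 P by (simp add: power_mult_distrib)
  have "(k\<^sup>2 * sqrt \<Theta>2 * P)\<^sup>2 / (2 * s2) - 4 * xx\<^sup>2 = k\<^sup>2 * P / (2 * s1 * s2) * (k\<^sup>2 * \<Theta>2 * P * s1 - 16 * \<Theta>1 * s2)"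
    unfolding xx_sq aa2 using T2 s1 s2 by (simp add: power_mult_distrib field_simps power2_eq_square)
  then show ?thesis using h by (simp add: k_def)
qed

lemma non_nb:
  assumes st: "s \<in> qam_symbols m" "t \<in> qam_symbols m" and ne: "t \<noteq> s"
    and nx: "\<not> (t = (- fst s, snd s) \<and> \<bar>fst s\<bar> = 1)" and ny: "\<not> (t = (fst s, - snd s) \<and> \<bar>snd s\<bar> = 1)"
  shows "measure (Dm s) (Bs s t) \<le> exp (- xx\<^sup>2)"
proof -
  have odd: "odd (fst s)" "odd (snd s)" "odd (fst t)" "odd (snd t)"
    using st by (auto simp: qam_symbols_def qam_amps_def)
  define K where "K = Kd s1 s2 (rx_mean M \<Theta>1 \<Theta>2 P s) (rx_mean M \<Theta>1 \<Theta>2 P t)"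
  define b where "b = (qam_k1 M)\<^sup>2 * sqrt \<Theta>2 * P"
  define Es where "Es = (fst s)\<^sup>2 + (snd s)\<^sup>2"
  define Et where "Et = (fst t)\<^sup>2 + (snd t)\<^sup>2"
  define d where "d = (fst t - fst s)\<^sup>2 + (snd t - snd s)\<^sup>2"
  have Kf: "K = aa\<^sup>2 * of_int d / s1 + (b * of_int (Et - Es))\<^sup>2 / (2 * s2)"
  proof -
    have n1: "(aa * of_int (fst t) - aa * of_int (fst s))\<^sup>2 + (aa * of_int (snd t) - aa * of_int (snd s))\<^sup>2 = aa\<^sup>2 * of_int d"
      unfolding d_def by (simp add: power_mult_distrib right_diff_distrib[symmetric] distrib_left)
    have n2: "b * ((of_int (fst t))\<^sup>2 + (of_int (snd t))\<^sup>2) - b * ((of_int (fst s))\<^sup>2 + (of_int (snd s))\<^sup>2) = b * of_int (Et - Es)"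
      unfolding Et_def Es_def by (simp add: right_diff_distrib)
    show ?thesis unfolding K_def mu_eq b_def[symmetric] by (simp only: Kd_def fst_conv snd_conv n1 n2)
  qed
  have K: "K \<ge> 4 * xx\<^sup>2"
  proof (cases "Es = Et")
    case True
    have "d \<ge> 8" unfolding d_def
      by (rule energy_sep) (use odd True ne nx ny Es_def Et_def in \<open>auto simp: prod_eq_iff\<close>)
    then have "of_int d \<ge> (8::real)" by simp
    then have "aa\<^sup>2 * of_int d / s1 \<ge> aa\<^sup>2 * 8 / s1"
      using s1 by (intro divide_right_mono mult_left_mono) auto
    then show ?thesis unfolding Kf xx_sq using True s2 by (simp add: mult.commute)
  next
    case False
    then have "\<bar>Et - Es\<bar> \<ge> 1" by linarith
    then have "\<bar>Et - Es\<bar> * \<bar>Et - Es\<bar> \<ge> 1 * 1" by (intro mult_mono) auto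
    then have "(Et - Es)\<^sup>2 \<ge> 1" by (simp add: power2_eq_square abs_mult[symmetric])
    then have "(of_int (Et - Es))\<^sup>2 \<ge> (1::real)" by (metis of_int_1 of_int_le_iff of_int_power)
    then have "(b * of_int (Et - Es))\<^sup>2 \<ge> b\<^sup>2 * 1"
      unfolding power_mult_distrib by (intro mult_left_mono) auto
    then have "(b * of_int (Et - Es))\<^sup>2 / (2 * s2) \<ge> b\<^sup>2 / (2 * s2)"
      using s2 by (simp add: divide_right_mono)
    moreover have "aa\<^sup>2 * of_int d / s1 \<ge> 0" unfolding d_def using s1 by simp
    moreover have "4 * xx\<^sup>2 \<le> b\<^sup>2 / (2 * s2)" using big_ineq by (simp add: b_def)
    ultimately show ?thesis unfolding Kf by linarith
  qed
  have "measure (Dm s) (Bs s t) \<le> exp (- K / 4)" unfolding K_def by (rule pairwise[OF s1 s2])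
  also have "\<dots> \<le> exp (- xx\<^sup>2)" using K by simp
  finally show ?thesis .
qed

lemma S_fin: "finite (qam_symbols m)"
  unfolding qam_symbols_def using amps_card[OF ev m0] by simp

lemma S_card: "card (qam_symbols m) = M"
  unfolding qam_symbols_def M using amps_card[OF ev m0] by (simp add: card_cartesian_product power2_eq_square)

lemma S_neg: "(a, b) \<in> qam_symbols m \<Longrightarrow> (- a, b) \<in> qam_symbols m \<and> (a, - b) \<in> qam_symbols m \<and> (- a, - b) \<in> qam_symbols m"
  by (auto simp: qam_symbols_def qam_amps_def)

lemma S_nz: "s \<in> qam_symbols m \<Longrightarrow> fst s \<noteq> 0 \<and> snd s \<noteq> 0"
  by (auto simp: qam_symbols_def qam_amps_def)

lemma Bs_sets: "Bs s t \<in> sets (Dm s)"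
  using lik_set_meas[OF s1 s2] by (simp only: sets_density sets_lborel)

lemma cond_err_eq: "ml_cond_error M m \<Theta>1 \<Theta>2 s1 s2 P s = measure (Dm s) (\<Union>t\<in>qam_symbols m - {s}. Bs s t)"
proof -
  have reg: "ml_error_region M m \<Theta>1 \<Theta>2 s1 s2 P s = (\<Union>t\<in>qam_symbols m - {s}. Bs s t)"
    unfolding ml_error_region_def by auto
  have "(\<Union>t\<in>qam_symbols m - {s}. Bs s t) \<in> sets borel"
    using S_fin by (intro sets.finite_UN) (auto simp: lik_set_meas[OF s1 s2])
  then show ?thesis unfolding ml_cond_error_def reg by (rule cond_eq[OF s1 s2])
qed

definition "cnt s = (if \<bar>fst s\<bar> = 1 then 1 else 0) + (if \<bar>snd s\<bar> = 1 then 1 else (0::real))"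

lemma upper:
  assumes sS: "s \<in> qam_symbols m"
  shows "ml_cond_error M m \<Theta>1 \<Theta>2 s1 s2 P s \<le> cnt s * Q_func xx + real M * exp (- xx\<^sup>2)"
proof -
  interpret D: prob_space "Dm s" by (rule lik_prob[OF s1 s2])
  let ?S = "qam_symbols m"
  let ?p = "\<lambda>t. measure (Dm s) (Bs s t)"
  let ?nx = "(- fst s, snd s)" and ?ny = "(fst s, - snd s)"
  define N where "N = (if \<bar>fst s\<bar> = 1 then {?nx} else {}) \<union> (if \<bar>snd s\<bar> = 1 then {?ny} else {})"
  have nz: "fst s \<noteq> 0" "snd s \<noteq> 0" using S_nz[OF sS] by auto
  have inS: "?nx \<in> ?S" "?ny \<in> ?S" using S_neg[of "fst s" "snd s"] sS by auto
  have NS: "N \<subseteq> ?S - {s}" using inS nz by (auto simp: N_def prod_eq_iff)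
  have finN: "finite N" by (simp add: N_def)
  have "ml_cond_error M m \<Theta>1 \<Theta>2 s1 s2 P s \<le> (\<Sum>t\<in>?S - {s}. ?p t)"
    unfolding cond_err_eq using S_fin Bs_sets by (intro D.finite_measure_subadditive_finite) auto
  also have "\<dots> = (\<Sum>t\<in>(?S - {s}) - N. ?p t) + (\<Sum>t\<in>N. ?p t)"
    using NS S_fin by (intro sum.subset_diff) auto
  also have "(\<Sum>t\<in>N. ?p t) = cnt s * Q_func xx"
  proof -
    have "?nx \<noteq> ?ny" using nz by auto
    then show ?thesis unfolding N_def cnt_def using nb_x nb_y
      by (cases "\<bar>fst s\<bar> = 1"; cases "\<bar>snd s\<bar> = 1") (auto simp: algebra_simps)
  qed
  also have "(\<Sum>t\<in>(?S - {s}) - N. ?p t) \<le> (\<Sum>t\<in>(?S - {s}) - N. exp (- xx\<^sup>2))"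
  proof (rule sum_mono)
    fix t assume t: "t \<in> ?S - {s} - N"
    show "?p t \<le> exp (- xx\<^sup>2)"
      using t by (intro non_nb[OF sS]) (auto simp: N_def)
  qed
  also have "\<dots> = real (card (?S - {s} - N)) * exp (- xx\<^sup>2)" by simp
  also have "\<dots> \<le> real M * exp (- xx\<^sup>2)"
  proof -
    have "card (?S - {s} - N) \<le> card ?S" using S_fin by (intro card_mono) auto
    then show ?thesis using S_card by (intro mult_right_mono) auto
  qed
  finally show ?thesis by simp
qed

lemma diag_sub:
  "Bs s (- fst s, snd s) \<inter> Bs s (fst s, - snd s) \<subseteq> Bs s (- fst s, - snd s)"
proof (rule subsetI)
  fix r
  let ?q = "\<lambda>t. qf s1 s2 (rx_mean M \<Theta>1 \<Theta>2 P t) r"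
  assume "r \<in> Bs s (- fst s, snd s) \<inter> Bs s (fst s, - snd s)"
  then have a: "r \<in> Bs s (- fst s, snd s)" "r \<in> Bs s (fst s, - snd s)" by auto
  have "?q (- fst s, - snd s) - ?q s = (?q (- fst s, snd s) - ?q s) + (?q (fst s, - snd s) - ?q s)"
    unfolding qf_def mu_eq by (simp add: power2_eq_square algebra_simps)
  moreover have "?q (- fst s, snd s) \<le> ?q s" "?q (fst s, - snd s) \<le> ?q s"
    using a by (auto simp: lik_le_iff[OF s1 s2])
  ultimately have "?q (- fst s, - snd s) \<le> ?q s" by linarith
  then show "r \<in> Bs s (- fst s, - snd s)" by (simp add: lik_le_iff[OF s1 s2])
qed

lemma lower:
  assumes sS: "s \<in> qam_symbols m"
  shows "cnt s * Q_func xx - exp (- xx\<^sup>2) \<le> ml_cond_error M m \<Theta>1 \<Theta>2 s1 s2 P s"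
proof -
  interpret D: prob_space "Dm s" by (rule lik_prob[OF s1 s2])
  let ?S = "qam_symbols m"
  let ?E = "\<Union>t\<in>qam_symbols m - {s}. Bs s t"
  let ?nx = "(- fst s, snd s)" and ?ny = "(fst s, - snd s)" and ?d = "(- fst s, - snd s)"
  have nz: "fst s \<noteq> 0" "snd s \<noteq> 0" using S_nz[OF sS] by auto
  have inS: "?nx \<in> ?S" "?ny \<in> ?S" "?d \<in> ?S" using S_neg[of "fst s" "snd s"] sS by auto
  have Esets: "?E \<in> sets (Dm s)" using S_fin Bs_sets by (intro sets.finite_UN) auto
  have c: "ml_cond_error M m \<Theta>1 \<Theta>2 s1 s2 P s = measure (Dm s) ?E" by (rule cond_err_eq)
  have sub1: "Bs s ?nx \<subseteq> ?E" using inS nz by (auto simp: prod_eq_iff)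
  have sub2: "Bs s ?ny \<subseteq> ?E" using inS nz by (auto simp: prod_eq_iff)
  have e0: "exp (- xx\<^sup>2) \<ge> 0" by simp
  show ?thesis
  proof (cases "\<bar>fst s\<bar> = 1")
    case T1: True
    show ?thesis
    proof (cases "\<bar>snd s\<bar> = 1")
      case T2: True
      have "measure (Dm s) (Bs s ?nx) + measure (Dm s) (Bs s ?ny) = measure (Dm s) (Bs s ?nx \<union> Bs s ?ny) + measure (Dm s) (Bs s ?nx \<inter> Bs s ?ny)"
      proof -
        have "emeasure (Dm s) (Bs s ?nx) + emeasure (Dm s) (Bs s ?ny) = emeasure (Dm s) (Bs s ?nx \<union> Bs s ?ny) + emeasure (Dm s) (Bs s ?nx \<inter> Bs s ?ny)"
          by (rule emeasure_Un_Int) (auto intro: Bs_sets)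
        then show ?thesis by (simp add: D.emeasure_eq_measure ennreal_plus[symmetric] del: ennreal_plus)
      qed
      moreover have "measure (Dm s) (Bs s ?nx \<union> Bs s ?ny) \<le> measure (Dm s) ?E"
        using sub1 sub2 Esets by (intro D.finite_measure_mono) auto
      moreover have "measure (Dm s) (Bs s ?nx \<inter> Bs s ?ny) \<le> measure (Dm s) (Bs s ?d)"
        using diag_sub Bs_sets by (intro D.finite_measure_mono) auto
      moreover have "measure (Dm s) (Bs s ?d) \<le> exp (- xx\<^sup>2)"
        using inS nz by (intro non_nb[OF sS]) (auto simp: prod_eq_iff)
      moreover have "cnt s * Q_func xx = Q_func xx + Q_func xx" using T1 T2 by (simp add: cnt_def)
      ultimately show ?thesis unfolding c using nb_x[OF T1] nb_y[OF T2] by linarith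
    next
      case F2: False
      have "measure (Dm s) (Bs s ?nx) \<le> measure (Dm s) ?E"
        using sub1 Esets by (intro D.finite_measure_mono) auto
      moreover have "cnt s * Q_func xx = Q_func xx" using T1 F2 by (simp add: cnt_def)
      ultimately show ?thesis unfolding c using nb_x[OF T1] e0 by linarith
    qed
  next
    case F1: False
    show ?thesis
    proof (cases "\<bar>snd s\<bar> = 1")
      case T2: True
      have "measure (Dm s) (Bs s ?ny) \<le> measure (Dm s) ?E"
        using sub2 Esets by (intro D.finite_measure_mono) auto
      moreover have "cnt s * Q_func xx = Q_func xx" using F1 T2 by (simp add: cnt_def)
      ultimately show ?thesis unfolding c using nb_y[OF T2] e0 by linarith
    next
      case F2: False
      have "cnt s = 0" using F1 F2 by (simp add: cnt_def)
      then have "cnt s * Q_func xx = 0" by simp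
      moreover have "measure (Dm s) ?E \<ge> 0" by (rule measure_nonneg)
      ultimately show ?thesis unfolding c using e0 by linarith
    qed
  qed
qed

lemma total: "\<bar>qam_Pe M m \<Theta>1 \<Theta>2 s1 s2 P - 4 / sqrt (real M) * Q_func xx\<bar> \<le> real M * exp (- xx\<^sup>2)"
proof -
  let ?S = "qam_symbols m"
  let ?c = "ml_cond_error M m \<Theta>1 \<Theta>2 s1 s2 P"
  let ?e = "exp (- xx\<^sup>2)"
  have cs: "(\<Sum>s\<in>?S. cnt s * Q_func xx) = 4 * real m * Q_func xx"
    using cnt_sum[OF ev m0] by (simp add: sum_distrib_right[symmetric] cnt_def)
  have up: "(\<Sum>s\<in>?S. ?c s) \<le> 4 * real m * Q_func xx + real M * (real M * ?e)"
  proof -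
    have "(\<Sum>s\<in>?S. ?c s) \<le> (\<Sum>s\<in>?S. cnt s * Q_func xx + real M * ?e)"
      by (intro sum_mono upper)
    also have "\<dots> = 4 * real m * Q_func xx + real M * (real M * ?e)"
      by (simp add: sum.distrib cs S_card)
    finally show ?thesis .
  qed
  have lo: "4 * real m * Q_func xx - real M * ?e \<le> (\<Sum>s\<in>?S. ?c s)"
  proof -
    have "4 * real m * Q_func xx - real M * ?e = (\<Sum>s\<in>?S. cnt s * Q_func xx - ?e)"
      by (simp add: sum_subtractf cs S_card)
    also have "\<dots> \<le> (\<Sum>s\<in>?S. ?c s)"
      by (intro sum_mono lower)
    finally show ?thesis .
  qed
  have Mpos: "real M > 0" using m0 M by simp
  have sq: "sqrt (real M) = real m" using M by simp
  have t: "4 / sqrt (real M) * Q_func xx = (1 / real M) * (4 * real m * Q_func xx)"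
    unfolding sq using M m0 by (simp add: power2_eq_square field_simps)
  have Pe: "qam_Pe M m \<Theta>1 \<Theta>2 s1 s2 P = (1 / real M) * (\<Sum>s\<in>?S. ?c s)"
    by (simp add: qam_Pe_def)
  have u: "qam_Pe M m \<Theta>1 \<Theta>2 s1 s2 P - 4 / sqrt (real M) * Q_func xx \<le> real M * ?e"
  proof -
    have "(1 / real M) * (\<Sum>s\<in>?S. ?c s) \<le> (1 / real M) * (4 * real m * Q_func xx + real M * (real M * ?e))"
      using up Mpos by (intro mult_left_mono) auto
    also have "\<dots> = (1 / real M) * (4 * real m * Q_func xx) + real M * ?e"
      using Mpos by (simp add: field_simps)
    finally show ?thesis unfolding Pe t by linarith
  qed
  have l: "- (real M * ?e) \<le> qam_Pe M m \<Theta>1 \<Theta>2 s1 s2 P - 4 / sqrt (real M) * Q_func xx"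
  proof -
    have "(1 / real M) * (4 * real m * Q_func xx - real M * ?e) \<le> (1 / real M) * (\<Sum>s\<in>?S. ?c s)"
      using lo Mpos by (intro mult_left_mono) auto
    moreover have "(1 / real M) * (4 * real m * Q_func xx - real M * ?e) = (1 / real M) * (4 * real m * Q_func xx) - ?e"
      using Mpos by (simp add: field_simps)
    moreover have "?e \<le> real M * ?e"
    proof -
      have "real M \<ge> 1" using Mpos by simp
      then show ?thesis by (simp add: mult_le_cancel_right1)
    qed
    ultimately show ?thesis unfolding Pe t by linarith
  qed
  from u l show ?thesis by (simp add: abs_le_iff)
qed

lemma total2: "\<bar>qam_Pe M m \<Theta>1 \<Theta>2 s1 s2 P - 4 / sqrt (real M) * Q_func (sqrt 2 * (qam_k1 M * sqrt (\<Theta>1 * P)) / sqrt s1)\<bar>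
   \<le> real M * exp (- (sqrt 2 * (qam_k1 M * sqrt (\<Theta>1 * P)) / sqrt s1)\<^sup>2)"
  using total unfolding xx_def aa_def .

end


lemma g_lim: "((\<lambda>x::real. exp (- x\<^sup>2 / 2 + 2 * x + 1)) \<longlongrightarrow> 0) at_top"
  by real_asymp

lemma X_lim: assumes "c > 0" shows "filterlim (\<lambda>P::real. c * sqrt P) at_top at_top"
  using assms by real_asymp

lemma g_bound: assumes "x \<ge> 0" shows "exp (- x\<^sup>2 + (x / sqrt 2 + 1)\<^sup>2) \<le> exp (- x\<^sup>2 / 2 + 2 * x + 1)"
proof -
  have "(x / sqrt 2 + 1)\<^sup>2 = x\<^sup>2 / 2 + sqrt 2 * x + 1"
    by (simp add: power2_eq_square field_simps)
  moreover have "sqrt 2 \<le> 2" using real_sqrt_le_mono[of 2 4] by (simp add: real_sqrt_four)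
  then have "sqrt 2 * x \<le> 2 * x" using assms by (intro mult_right_mono) auto
  ultimately show ?thesis by simp
qed

theorem proposition6:
  fixes M m K :: nat and h :: "nat \<Rightarrow> complex" and \<rho> :: "nat \<Rightarrow> real"
    and s1sq s2sq :: real
  assumes "M = m ^ 2" and "even m" and "m > 0"
    and "K \<ge> 1"
    and "\<forall>k\<in>{1..K}. h k \<noteq> 0"
    and "\<forall>k\<in>{1..K}. 0 \<le> \<rho> k \<and> \<rho> k \<le> 1"
    and "\<exists>k\<in>{1..K}. \<rho> k \<noteq> 0"
    and "\<exists>k\<in>{1..K}. \<rho> k \<noteq> 1"
    and "s1sq > 0" and "s2sq > 0"
  defines "\<Theta>1 \<equiv> \<Sum>k=1..K. \<rho> k * (cmod (h k))\<^sup>2"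
    and "\<Theta>2 \<equiv> \<Sum>k=1..K. (1 - \<rho> k)\<^sup>2 * (cmod (h k)) ^ 4"
  shows "(\<lambda>P. qam_Pe M m \<Theta>1 \<Theta>2 s1sq s2sq P) \<sim>[at_top]
         (\<lambda>P. 4 / sqrt (real M) * Q_func (sqrt 2 * (qam_k1 M * sqrt (\<Theta>1 * P)) / sqrt s1sq))"
proof -
  note Mdef = assms(1) and ev = assms(2) and m0 = assms(3) and s1 = assms(9) and s2 = assms(10)
  have T1: "\<Theta>1 > 0"
  proof -
    obtain k where k: "k \<in> {1..K}" "\<rho> k \<noteq> 0" using assms(7) by auto
    have "\<rho> k > 0" using k assms(6) by force
    moreover have "cmod (h k) > 0" using k assms(5) by auto
    ultimately have "\<rho> k * (cmod (h k))\<^sup>2 > 0" by simp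
    then show ?thesis unfolding \<Theta>1_def using k assms(6)
      by (intro sum_pos2[of "{1..K}" k]) auto
  qed
  have T2: "\<Theta>2 > 0"
  proof -
    obtain k where k: "k \<in> {1..K}" "\<rho> k \<noteq> 1" using assms(8) by auto
    have "1 - \<rho> k \<noteq> 0" using k by simp
    moreover have "cmod (h k) > 0" using k assms(5) by auto
    ultimately have "(1 - \<rho> k)\<^sup>2 * (cmod (h k)) ^ 4 > 0" by simp
    then show ?thesis unfolding \<Theta>2_def using k
      by (intro sum_pos2[of "{1..K}" k]) auto
  qed
  have kpos: "qam_k1 M > 0"
  proof -
    have "m \<ge> 2" using ev m0 by presburger
    then have "m * m \<ge> 2 * 2" by (intro mult_mono) auto
    then have "M \<ge> 4" unfolding Mdef by (simp add: power2_eq_square)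
    then show ?thesis unfolding qam_k1_def by simp
  qed
  define c where "c = sqrt 2 * qam_k1 M * sqrt \<Theta>1 / sqrt s1sq"
  have cpos: "c > 0" unfolding c_def using kpos T1 s1 by simp
  define X where "X P = sqrt 2 * (qam_k1 M * sqrt (\<Theta>1 * P)) / sqrt s1sq" for P
  define Tg where "Tg P = 4 / sqrt (real M) * Q_func (X P)" for P
  define Pe where "Pe P = qam_Pe M m \<Theta>1 \<Theta>2 s1sq s2sq P" for P
  define P0 where "P0 = max 1 (16 * \<Theta>1 * s2sq / ((qam_k1 M)\<^sup>2 * \<Theta>2 * s1sq))"
  define C where "C = real M * real m * sqrt pi / 4"
  define g where "g x = exp (- x\<^sup>2 / 2 + 2 * x + 1)" for x :: real
  have Xc: "X P = c * sqrt P" if "P \<ge> 0" for P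
    unfolding X_def c_def using that T1 by (simp add: real_sqrt_mult)
  have key: "\<bar>Pe P / Tg P - 1\<bar> \<le> C * g (c * sqrt P)" if P: "P \<ge> P0" for P
  proof -
    have P1: "P > 0" "P \<ge> 16 * \<Theta>1 * s2sq / ((qam_k1 M)\<^sup>2 * \<Theta>2 * s1sq)" using P by (auto simp: P0_def)
    have bnd: "\<bar>Pe P - Tg P\<bar> \<le> real M * exp (- (X P)\<^sup>2)"
      using total2[OF Mdef ev m0 T1 T2 s1 s2 P1] unfolding Pe_def Tg_def X_def .
    have X0: "X P \<ge> 0" using Xc[of P] P1 cpos by simp
    define L where "L = exp (- (X P / sqrt 2 + 1)\<^sup>2) / sqrt pi"
    have Lpos: "L > 0" unfolding L_def by simp
    have QL: "L \<le> Q_func (X P)" unfolding L_def by (rule Q_lower[OF X0])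
    have sq: "sqrt (real M) = real m" using Mdef by simp
    have mpos: "real m > 0" using m0 by simp
    have Tg_eq: "Tg P = 4 / real m * Q_func (X P)" unfolding Tg_def sq ..
    have TgL: "4 / real m * L \<le> Tg P" unfolding Tg_eq using QL mpos by (intro mult_left_mono) auto
    have TL: "4 / real m * L > 0" using Lpos mpos by simp
    then have Tgpos: "Tg P > 0" using TgL by linarith
    have "\<bar>Pe P / Tg P - 1\<bar> = \<bar>Pe P - Tg P\<bar> / Tg P"
    proof -
      have "Pe P / Tg P - 1 = (Pe P - Tg P) / Tg P" using Tgpos by (simp add: diff_divide_distrib)
      then show ?thesis using Tgpos by (simp add: abs_divide)
    qed
    also have "\<dots> \<le> real M * exp (- (X P)\<^sup>2) / (4 / real m * L)"
      using bnd TgL TL by (intro frac_le) auto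
    also have "\<dots> = C * exp (- (X P)\<^sup>2 + (X P / sqrt 2 + 1)\<^sup>2)"
    proof -
      define A where "A = (X P / sqrt 2 + 1)\<^sup>2"
      define e where "e = exp (- (X P)\<^sup>2)"
      have eA: "exp (- A) = 1 / exp A" by (simp add: exp_minus inverse_eq_divide)
      have "real M * e / (4 / real m * (exp (- A) / sqrt pi)) = (real M * real m * sqrt pi / 4) * (e * exp A)"
        unfolding eA using mpos by (simp add: field_simps)
      moreover have "exp (- (X P)\<^sup>2 + A) = e * exp A" unfolding e_def by (simp only: exp_add)
      ultimately show ?thesis unfolding C_def L_def A_def[symmetric] e_def[symmetric] by simp
    qed
    also have "\<dots> \<le> C * g (X P)"
      unfolding g_def C_def using g_bound[OF X0] by (intro mult_left_mono) auto
    finally show ?thesis using Xc[of P] P1 by simp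
  qed
  have lim0: "((\<lambda>P. C * g (c * sqrt P)) \<longlongrightarrow> 0) at_top"
  proof -
    have "((\<lambda>P. g (c * sqrt P)) \<longlongrightarrow> 0) at_top"
      unfolding g_def by (rule filterlim_compose[OF g_lim X_lim[OF cpos]])
    then show ?thesis by (rule tendsto_mult_right_zero)
  qed
  have "((\<lambda>P. Pe P / Tg P - 1) \<longlongrightarrow> 0) at_top"
  proof (rule Lim_null_comparison[OF _ lim0])
    show "\<forall>\<^sub>F P in at_top. norm (Pe P / Tg P - 1) \<le> C * g (c * sqrt P)"
      using eventually_ge_at_top[of P0] by eventually_elim (use key in auto)
  qed
  then have "((\<lambda>P. Pe P / Tg P) \<longlongrightarrow> 1) at_top" by (rule LIM_zero_cancel)
  then have "Pe \<sim>[at_top] Tg" by (rule asymp_equivI')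
  then show ?thesis unfolding Pe_def Tg_def X_def .
qed

end
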